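(* Let $H$ be a real Hilbert space, let $D\subseteq H$ be a nonempty closed convex set, and let $T_1,\dots,T_m:D\to D$ be firmly nonexpansive operators with $F:=\bigcap_{i=1}^m\mathrm{Fix}(T_i)\neq\emptyset$. Let $\mathcal{M}'$ be a finite nonempty subset of $\mathcal{M}$, enumerated as $S_1,\dots,S_N$ with $N=|\mathcal{M}'|$ and $S_r=(\Omega_r,w_r)$, and set $T_{S_r}:=\sum_{t\in\Omega_r}w_r(t)T[t]$. Let $\hat w_1,\dots,\hat w_N$ be strictly positive reals with $\sum_{r=1}^N\hat w_r=1$, let $(\lambda_k)_{k\in\mathbb{N}}$ be a steering sequence, and let $u,x^0\in D$. Then the sequence defined by $$x^{k+1}=\lambda_k u+(1-\lambda_k)\sum_{r=1}^N\hat w_r\,T_{S_r}(x^k),\quad k\ge0,$$ converges strongly to $P_F(u)$.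
   Context: An operator $T:D\to H$ is firmly nonexpansive if $\|T(x)-T(y)\|^2\le\langle x-y,T(x)-T(y)\rangle$ for all $x,y\in D$. $\mathrm{Fix}(T)=\{x\in D: T(x)=x\}$; $P_F$ is the metric projection onto $F$. An index vector is a finite tuple $t=(t_1,\dots,t_q)$ with each $t_\ell\in\{1,\dots,m\}$; the string operator is $T[t]:=T_{t_q}T_{t_{q-1}}\cdots T_{t_1}$. A finite set $\Omega$ of index vectors is fit if every $i\in\{1,\dots,m\}$ appears as a component of some $t\in\Omega$. $\mathcal{M}$ denotes the collection of all pairs $(\Omega,w)$ where $\Omega$ is a fit finite set of index vectors and $w:\Omega\to(0,1]$ satisfies $\sum_{t\in\Omega}w(t)=1$. A steering sequence is a real sequence $(\lambda_k)_{k\in\mathbb{N}}$ with $\lambda_k\in[0,1]$ for all $k$, $\lim_{k\to\infty}\lambda_k=0$, $\sum_{k=0}^\infty\lambda_k=+\infty$, and $\sum_{k=0}^\infty|\lambda_{k+1}-\lambda_k|<\infty$. *)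

theory Defs
  imports "HOL-Analysis.Analysis"
begin

definition firmly_nonexpansive_on :: "'a::real_inner set \<Rightarrow> ('a \<Rightarrow> 'a) \<Rightarrow> bool" where
  "firmly_nonexpansive_on D T \<longleftrightarrow>
     (\<forall>x\<in>D. \<forall>y\<in>D. (norm (T x - T y))\<^sup>2 \<le> inner (x - y) (T x - T y))"

definition Fix :: "'a set \<Rightarrow> ('a \<Rightarrow> 'a) \<Rightarrow> 'a set" where
  "Fix D T = {x \<in> D. T x = x}"

text \<open>Metric projection onto F (the nearest point; unique for closed convex nonempty F
  in a Hilbert space).\<close>
definition metric_proj :: "'a::real_inner set \<Rightarrow> 'a \<Rightarrow> 'a" where
  "metric_proj F u = (SOME p. p \<in> F \<and> (\<forall>y\<in>F. dist u p \<le> dist u y))"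

text \<open>Index vectors are nonempty lists t = [t_1,...,t_q] with entries in {1..m}.
  String operator T[t] = T_{t_q} \<circ> ... \<circ> T_{t_1} (t_1 applied first).\<close>
fun string_op :: "(nat \<Rightarrow> 'a \<Rightarrow> 'a) \<Rightarrow> nat list \<Rightarrow> 'a \<Rightarrow> 'a" where
  "string_op T [] = id"
| "string_op T (i # t) = string_op T t \<circ> T i"

definition index_vector :: "nat \<Rightarrow> nat list \<Rightarrow> bool" where
  "index_vector m t \<longleftrightarrow> t \<noteq> [] \<and> set t \<subseteq> {1..m}"

definition fit :: "nat \<Rightarrow> nat list set \<Rightarrow> bool" where
  "fit m \<Omega> \<longleftrightarrow> finite \<Omega> \<and> (\<forall>t\<in>\<Omega>. index_vector m t) \<and>
     (\<forall>i\<in>{1..m}. \<exists>t\<in>\<Omega>. i \<in> set t)"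

text \<open>Membership of the pair (\<Omega>, w) in the collection \<M>; w is only relevant on \<Omega>.\<close>
definition in_M :: "nat \<Rightarrow> nat list set \<Rightarrow> (nat list \<Rightarrow> real) \<Rightarrow> bool" where
  "in_M m \<Omega> w \<longleftrightarrow> fit m \<Omega> \<and> (\<forall>t\<in>\<Omega>. 0 < w t \<and> w t \<le> 1) \<and> (\<Sum>t\<in>\<Omega>. w t) = 1"

definition T_S :: "(nat \<Rightarrow> 'a::real_vector \<Rightarrow> 'a) \<Rightarrow> nat list set \<Rightarrow> (nat list \<Rightarrow> real) \<Rightarrow> 'a \<Rightarrow> 'a" where
  "T_S T \<Omega> w x = (\<Sum>t\<in>\<Omega>. w t *\<^sub>R string_op T t x)"

definition steering :: "(nat \<Rightarrow> real) \<Rightarrow> bool" where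
  "steering lam \<longleftrightarrow> (\<forall>k. 0 \<le> lam k \<and> lam k \<le> 1) \<and> lam \<longlonglongrightarrow> 0 \<and>
     \<not> summable lam \<and> summable (\<lambda>k. \<bar>lam (Suc k) - lam k\<bar>)"

end

theory Submission
  imports Defs
begin


lemma nonsummable_tendsto_top:
  fixes l :: "nat \<Rightarrow> real"
  assumes "\<And>k. 0 \<le> l k" "\<not> summable l"
  shows "filterlim (\<lambda>n. \<Sum>k\<in>{K..<n}. l k) at_top sequentially"
proof (subst filterlim_at_top, intro allI)
  fix Z :: real
  have "\<not> (\<forall>n. (\<Sum>i<n. l i) \<le> Z + (\<Sum>k<K. l k))"
    using summableI_nonneg_bounded[of l] assms by blast
  then obtain n0 where n0: "(\<Sum>i<n0. l i) > Z + (\<Sum>k<K. l k)" by (auto simp: not_le)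
  have "(\<Sum>k\<in>{K..<n}. l k) \<ge> Z" if "n \<ge> n0" for n
  proof -
    have "(\<Sum>i<n0. l i) \<le> (\<Sum>i<n. l i)"
      using that assms(1) by (intro sum_mono2) auto
    moreover have "(\<Sum>i<n. l i) \<le> (\<Sum>k<K. l k) + (\<Sum>k\<in>{K..<n}. l k)"
    proof (cases "K \<le> n")
      case True
      then show ?thesis using sum.atLeastLessThan_concat[of 0 K n l] by (simp add: atLeast0LessThan)
    next
      case False
      then have "(\<Sum>i<n. l i) \<le> (\<Sum>k<K. l k)" using assms(1) by (intro sum_mono2) auto
      then show ?thesis using False by simp
    qed
    ultimately show ?thesis using n0 by linarith
  qed
  then show "\<forall>\<^sub>F n in sequentially. Z \<le> (\<Sum>k\<in>{K..<n}. l k)"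
    using eventually_sequentially by blast
qed

lemma xu_lemma:
  fixes a l b g :: "nat \<Rightarrow> real"
  assumes a0: "\<And>k. a k \<ge> 0" and l01: "\<And>k. 0 \<le> l k \<and> l k \<le> 1" and ns: "\<not> summable l"
    and rec: "\<And>k. a (Suc k) \<le> (1 - l k) * a k + l k * b k + g k"
    and g0: "\<And>k. g k \<ge> 0" and gs: "summable g"
    and bl: "\<And>e. e > 0 \<Longrightarrow> eventually (\<lambda>k. b k \<le> e) sequentially"
  shows "a \<longlonglongrightarrow> 0"
proof (rule LIMSEQ_I)
  fix r :: real assume "r > 0"
  define e where "e = r / 4"
  have e0: "e > 0" using \<open>r>0\<close> by (simp add: e_def)
  obtain K1 where K1: "\<And>k. k \<ge> K1 \<Longrightarrow> b k \<le> e" using bl[OF e0] by (auto simp: eventually_sequentially)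
  have "(\<lambda>n. \<Sum>i<n. g i) \<longlonglongrightarrow> suminf g" using gs summable_LIMSEQ by blast
  then obtain K2 where K2: "\<And>n. n \<ge> K2 \<Longrightarrow> norm ((\<Sum>i<n. g i) - suminf g) < e"
    using LIMSEQ_D[OF _ e0] by blast
  define K where "K = max K1 K2"
  have tail: "(\<Sum>k\<in>{K..<n}. g k) \<le> e" for n
  proof (cases "K \<le> n")
    case True
    then have "(\<Sum>i<n. g i) = (\<Sum>i<K. g i) + (\<Sum>k\<in>{K..<n}. g k)"
      using sum.atLeastLessThan_concat[of 0 K n g] by (simp add: atLeast0LessThan)
    moreover have "(\<Sum>i<n. g i) \<le> suminf g" using sum_le_suminf[OF gs, of "{..<n}"] g0 by auto
    moreover have "norm ((\<Sum>i<K. g i) - suminf g) < e" using K2 by (simp add: K_def)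
    ultimately show ?thesis by auto
  next
    case False then show ?thesis using e0 by simp
  qed
  define ee where "ee k = max (a k - e) 0" for k
  have step: "ee (Suc k) \<le> (1 - l k) * ee k + g k" if "k \<ge> K" for k
  proof -
    have "b k \<le> e" using K1 that by (simp add: K_def)
    then have "l k * b k \<le> l k * e" using l01[of k] by (simp add: mult_left_mono)
    then have "a (Suc k) - e \<le> (1 - l k) * (a k - e) + g k"
      using rec[of k] by (simp add: algebra_simps)
    moreover have "(1 - l k) * (a k - e) \<le> (1 - l k) * ee k"
      using l01[of k] by (intro mult_left_mono) (auto simp: ee_def)
    moreover have "0 \<le> (1 - l k) * ee k + g k" using l01[of k] g0[of k] by (simp add: ee_def)
    ultimately show ?thesis by (simp add: ee_def)
  qed
  have ind: "ee (K + d) \<le> exp (- (\<Sum>k\<in>{K..<K+d}. l k)) * ee K + (\<Sum>k\<in>{K..<K+d}. g k)" for d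
  proof (induction d)
    case 0 then show ?case by simp
  next
    case (Suc d)
    let ?S = "\<Sum>k\<in>{K..<K+d}. l k"
    have "ee (K + Suc d) \<le> (1 - l (K+d)) * ee (K+d) + g (K+d)" using step[of "K+d"] by simp
    also have "\<dots> \<le> (1 - l (K+d)) * (exp (- ?S) * ee K + (\<Sum>k\<in>{K..<K+d}. g k)) + g (K+d)"
      using Suc l01[of "K+d"] by (intro add_right_mono mult_left_mono) auto
    also have "\<dots> \<le> exp (- l (K+d)) * exp (- ?S) * ee K + (\<Sum>k\<in>{K..<K+d}. g k) + g (K+d)"
    proof -
      have "1 - l (K+d) \<le> exp (- l (K+d))" using exp_ge_add_one_self[of "- l (K+d)"] by simp
      moreover have "0 \<le> exp (- ?S) * ee K" by (simp add: ee_def)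
      moreover have "(1 - l (K+d)) * (\<Sum>k\<in>{K..<K+d}. g k) \<le> (\<Sum>k\<in>{K..<K+d}. g k)"
        using l01[of "K+d"] g0 by (intro mult_left_le_one_le sum_nonneg) auto
      ultimately show ?thesis
        by (smt (verit, best) distrib_left mult.assoc mult_right_mono)
    qed
    also have "\<dots> = exp (- (\<Sum>k\<in>{K..<K+Suc d}. l k)) * ee K + (\<Sum>k\<in>{K..<K+Suc d}. g k)"
      by (simp add: exp_add[symmetric] exp_minus_inverse algebra_simps)
    finally show ?case .
  qed
  have "filterlim (\<lambda>n. \<Sum>k\<in>{K..<n}. l k) at_top sequentially"
    using nonsummable_tendsto_top l01 ns by blast
  then have "((\<lambda>n. exp (- (\<Sum>k\<in>{K..<n}. l k)) * ee K) \<longlongrightarrow> 0 * ee K) sequentially"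
    by (intro tendsto_mult tendsto_const) (simp add: exp_at_bot filterlim_compose[OF exp_at_bot] filterlim_uminus_at_bot)
  then have "(\<lambda>n. exp (- (\<Sum>k\<in>{K..<n}. l k)) * ee K) \<longlonglongrightarrow> 0" by simp
  from LIMSEQ_D[OF this e0] obtain K3 where K3: "\<And>n. n \<ge> K3 \<Longrightarrow> norm (exp (- (\<Sum>k\<in>{K..<n}. l k)) * ee K - 0) < e"
    by blast
  show "\<exists>no. \<forall>n\<ge>no. norm (a n - 0) < r"
  proof (intro exI allI impI)
    fix n assume n: "n \<ge> max K K3"
    then obtain d where d: "n = K + d" by (metis le_Suc_ex max.boundedE)
    have "ee n \<le> exp (- (\<Sum>k\<in>{K..<n}. l k)) * ee K + (\<Sum>k\<in>{K..<n}. g k)" using ind[of d] d by simp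
    also have "\<dots> < 2 * e" using K3[of n] n tail[of n] by auto
    finally have "a n < 3 * e" unfolding ee_def by linarith
    then show "norm (a n - 0) < r" using a0[of n] by (simp add: e_def)
  qed
qed



lemma proj_char:
  fixes u p :: "'a::real_inner"
  assumes "p \<in> F" "\<And>q. q \<in> F \<Longrightarrow> inner (u - p) (q - p) \<le> 0"
  shows "metric_proj F u = p"
proof -
  have key: "(norm (u - p))\<^sup>2 + (norm (q - p))\<^sup>2 \<le> (norm (u - q))\<^sup>2" if "q \<in> F" for q
  proof -
    have "(norm ((u - p) - (q - p)))\<^sup>2 = (norm (u - p))\<^sup>2 - 2 * inner (u - p) (q - p) + (norm (q - p))\<^sup>2"
      unfolding power2_norm_eq_inner by (simp add: inner_diff_left inner_diff_right inner_commute)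
    then have "(norm (u - q))\<^sup>2 = (norm (u - p))\<^sup>2 - 2 * inner (u - p) (q - p) + (norm (q - p))\<^sup>2"
      by simp
    then show ?thesis using assms(2)[OF that] by linarith
  qed
  show ?thesis unfolding metric_proj_def
  proof (rule someI2[where a = p])
    show "p \<in> F \<and> (\<forall>y\<in>F. dist u p \<le> dist u y)"
    proof (intro conjI ballI)
      fix y assume "y \<in> F"
      then have "(norm (u - p))\<^sup>2 \<le> (norm (u - y))\<^sup>2" using key[of y] zero_le_power2[of "norm (y - p)"] by linarith
      then show "dist u p \<le> dist u y" unfolding dist_norm by (rule power2_le_imp_le) simp
    qed (fact assms(1))
  next
    fix p' assume h: "p' \<in> F \<and> (\<forall>y\<in>F. dist u p' \<le> dist u y)"
    then have "norm (u - p') \<le> norm (u - p)" using assms(1) by (simp add: dist_norm)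
    then have "(norm (u - p'))\<^sup>2 \<le> (norm (u - p))\<^sup>2" by (simp add: power_mono)
    then have "(norm (p' - p))\<^sup>2 \<le> 0" using key[of p'] h by linarith
    then show "p' = p" by simp
  qed
qed

lemma path_ineq:
  fixes V :: "'a::real_inner \<Rightarrow> 'a"
  assumes t: "0 < t" "t < 1" and z: "z = t *\<^sub>R u + (1 - t) *\<^sub>R V z"
    and q: "V q = q" and ne: "norm (V z - V q) \<le> norm (z - q)"
  shows "(norm (z - q))\<^sup>2 \<le> inner (u - q) (z - q)"
proof -
  have "z - q = t *\<^sub>R (u - q) + (1 - t) *\<^sub>R (V z - q)"
    by (subst z) (simp add: algebra_simps)
  then have "inner (z - q) (z - q) = t * inner (u - q) (z - q) + (1 - t) * inner (V z - q) (z - q)"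
    by (metis inner_add_left inner_scaleR_left)
  moreover have "inner (V z - q) (z - q) \<le> norm (V z - q) * norm (z - q)" by (rule norm_cauchy_schwarz)
  moreover have "norm (V z - q) * norm (z - q) \<le> norm (z - q) * norm (z - q)"
    using ne q by (simp add: mult_right_mono)
  ultimately have "(1 - t) * inner (V z - q) (z - q) \<le> (1 - t) * (norm (z - q) * norm (z - q))"
    using t by (intro mult_left_mono) auto
  with \<open>inner (z - q) (z - q) = _\<close>
  have "inner (z - q) (z - q) \<le> t * inner (u - q) (z - q) + (1 - t) * (norm (z - q) * norm (z - q))"
    by linarith
  then have "t * (norm (z - q))\<^sup>2 \<le> t * inner (u - q) (z - q)"
    by (simp add: power2_norm_eq_inner[symmetric] power2_eq_square algebra_simps)
  then show ?thesis using t by simp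
qed

lemma browder_mono:
  fixes V :: "'a::real_inner \<Rightarrow> 'a"
  assumes st: "0 < s" "s < t" "t < 1"
    and zs: "zs = s *\<^sub>R u + (1 - s) *\<^sub>R V zs" and zt: "zt = t *\<^sub>R u + (1 - t) *\<^sub>R V zt"
    and ne: "norm (V zs - V zt) \<le> norm (zs - zt)"
  shows "(norm (zs - zt))\<^sup>2 \<le> (norm (zs - u))\<^sup>2 - (norm (zt - u))\<^sup>2"
proof -
  define a where "a = zs - u"
  define b where "b = zt - u"
  have mono: "inner ((zs - V zs) - (zt - V zt)) (zs - zt) \<ge> 0"
  proof -
    have "inner ((zs - V zs) - (zt - V zt)) (zs - zt) = inner (zs - zt) (zs - zt) - inner (V zs - V zt) (zs - zt)"
      by (simp add: inner_diff_left)
    moreover have "inner (V zs - V zt) (zs - zt) \<le> norm (zs - zt) * norm (zs - zt)"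
      using norm_cauchy_schwarz[of "V zs - V zt" "zs - zt"] mult_right_mono[OF ne norm_ge_zero[of "zs - zt"]]
      by linarith
    ultimately show ?thesis by (simp add: power2_norm_eq_inner[symmetric] power2_eq_square)
  qed
  have es: "(1 - s) *\<^sub>R (zs - V zs) = - s *\<^sub>R a"
  proof -
    have "(1 - s) *\<^sub>R V zs = zs - s *\<^sub>R u" using zs by (simp add: algebra_simps)
    then show ?thesis unfolding a_def by (simp add: algebra_simps)
  qed
  have et: "(1 - t) *\<^sub>R (zt - V zt) = - t *\<^sub>R b"
  proof -
    have "(1 - t) *\<^sub>R V zt = zt - t *\<^sub>R u" using zt by (simp add: algebra_simps)
    then show ?thesis unfolding b_def by (simp add: algebra_simps)
  qed
  define al where "al = s * (1 - t)"
  define be where "be = t * (1 - s)"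
  have "0 \<le> ((1 - s) * (1 - t)) * inner ((zs - V zs) - (zt - V zt)) (zs - zt)"
    using mono st by simp
  also have "\<dots> = inner ((1 - t) *\<^sub>R ((1 - s) *\<^sub>R (zs - V zs)) - (1 - s) *\<^sub>R ((1 - t) *\<^sub>R (zt - V zt))) (zs - zt)"
    by (simp add: inner_diff_left algebra_simps)
  also have "\<dots> = inner (be *\<^sub>R b - al *\<^sub>R a) (a - b)"
    unfolding es et al_def be_def a_def b_def by (simp add: algebra_simps)
  also have "\<dots> = (be + al) * inner a b - be * inner b b - al * inner a a"
    by (simp add: inner_diff_left inner_diff_right inner_commute algebra_simps)
  finally have key: "be * inner b b + al * inner a a \<le> (be + al) * inner a b" by simp
  have nab: "(norm (zs - zt))\<^sup>2 = inner a a + inner b b - 2 * inner a b"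
    unfolding a_def b_def power2_norm_eq_inner
    by (simp add: inner_diff_left inner_diff_right inner_commute algebra_simps)
  have n0: "0 \<le> inner a a + inner b b - 2 * inner a b" using nab by (metis zero_le_power2)
  have al0: "al > 0" "be - al > 0" using st by (auto simp: al_def be_def algebra_simps)
  have na: "(norm (zs - u))\<^sup>2 = inner a a" "(norm (zt - u))\<^sup>2 = inner b b"
    by (simp_all add: a_def b_def power2_norm_eq_inner)
  have "(be + al) * (inner a a + inner b b - 2 * inner a b) \<le> (be - al) * (inner a a - inner b b)"
    using key by (simp add: algebra_simps)
  moreover have "0 \<le> (be + al) * (inner a a + inner b b - 2 * inner a b)"
    using n0 al0 by simp
  ultimately have "0 \<le> (be - al) * (inner a a - inner b b)" by linarith
  then have Y0: "0 \<le> inner a a - inner b b" using al0 by (simp add: zero_le_mult_iff)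
  have "(be - al) * (inner a a - inner b b) \<le> (be + al) * (inner a a - inner b b)"
    using Y0 al0 by (intro mult_right_mono) auto
  with \<open>(be + al) * _ \<le> _\<close>
  have "(be + al) * (inner a a + inner b b - 2 * inner a b) \<le> (be + al) * (inner a a - inner b b)" by linarith
  then have "inner a a + inner b b - 2 * inner a b \<le> inner a a - inner b b"
    using al0 by (simp add: mult_le_cancel_left)
  then show ?thesis using nab na by simp
qed



lemma browder:
  fixes D :: "'a::{real_inner,complete_space} set" and V :: "'a \<Rightarrow> 'a"
  assumes D: "closed D" "convex D" and VD: "\<And>y. y \<in> D \<Longrightarrow> V y \<in> D"
    and Vne: "\<And>y z. y \<in> D \<Longrightarrow> z \<in> D \<Longrightarrow> norm (V y - V z) \<le> norm (y - z)"
    and Fdef: "F = {y\<in>D. V y = y}" and q0: "q0 \<in> F" and u: "u \<in> D"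
  shows "\<exists>c p. p \<in> F \<and> c \<longlonglongrightarrow> p \<and>
     (\<forall>n. c n \<in> D \<and> c n = (1 / (real n + 2)) *\<^sub>R u + (1 - 1 / (real n + 2)) *\<^sub>R V (c n)) \<and>
     (\<forall>q\<in>F. inner (u - p) (q - p) \<le> 0)"
proof -
  define tt where "tt n = 1 / (real n + 2)" for n
  have tt: "0 < tt n" "tt n \<le> 1/2" for n by (auto simp: tt_def field_simps)
  have ttm: "tt m < tt n" if "n < m" for n m using that by (auto simp: tt_def field_simps)
  have "\<exists>z\<in>D. z = tt n *\<^sub>R u + (1 - tt n) *\<^sub>R V z" for n
  proof -
    let ?f = "\<lambda>z. tt n *\<^sub>R u + (1 - tt n) *\<^sub>R V z"
    have "\<exists>!z\<in>D. ?f z = z"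
    proof (rule Banach_fix[where c = "1 - tt n"])
      show "complete D" using D complete_eq_closed by blast
      show "D \<noteq> {}" using q0 Fdef by auto
      show "0 \<le> 1 - tt n" "1 - tt n < 1" using tt[of n] by auto
      show "?f ` D \<subseteq> D"
      proof (rule image_subsetI)
        fix y assume "y \<in> D"
        show "?f y \<in> D" using tt[of n] by (intro convexD[OF D(2) u VD[OF \<open>y \<in> D\<close>]]) auto
      qed
      fix y z assume "y \<in> D" "z \<in> D"
      have "dist (?f y) (?f z) = norm ((1 - tt n) *\<^sub>R (V y - V z))"
        by (simp add: dist_norm algebra_simps)
      also have "\<dots> = (1 - tt n) * norm (V y - V z)" using tt[of n] by simp
      also have "\<dots> \<le> (1 - tt n) * dist y z"
        using Vne[OF \<open>y\<in>D\<close> \<open>z\<in>D\<close>] tt[of n] by (simp add: dist_norm mult_left_mono)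
      finally show "dist (?f y) (?f z) \<le> (1 - tt n) * dist y z" .
    qed
    then obtain z where "z \<in> D" "?f z = z" by blast
    then show ?thesis by (intro bexI[of _ z]) auto
  qed
  then have "\<forall>n. \<exists>z. z \<in> D \<and> z = tt n *\<^sub>R u + (1 - tt n) *\<^sub>R V z" by blast
  then obtain c where c: "\<forall>n. c n \<in> D \<and> c n = tt n *\<^sub>R u + (1 - tt n) *\<^sub>R V (c n)"
    using choice[of "\<lambda>n z. z \<in> D \<and> z = tt n *\<^sub>R u + (1 - tt n) *\<^sub>R V z"] by blast
  then have cD: "\<And>n. c n \<in> D" and ceq: "\<And>n. c n = tt n *\<^sub>R u + (1 - tt n) *\<^sub>R V (c n)"
    by auto
  have q0D: "q0 \<in> D" "V q0 = q0" using q0 Fdef by auto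
  have B1: "(norm (c n - q))\<^sup>2 \<le> inner (u - q) (c n - q)" if "q \<in> F" for n q
    using that Fdef tt[of n] by (intro path_ineq[where V = V and t = "tt n"] ceq Vne cD) auto
  have B1': "norm (c n - q) \<le> norm (u - q)" if "q \<in> F" for n q
  proof -
    have "(norm (c n - q))\<^sup>2 \<le> norm (u - q) * norm (c n - q)"
      using B1[OF that, of n] norm_cauchy_schwarz[of "u - q" "c n - q"] by linarith
    then have h: "norm (c n - q) * norm (c n - q) \<le> norm (u - q) * norm (c n - q)" by (simp add: power2_eq_square)
    show ?thesis
    proof (cases "norm (c n - q) = 0")
      case True then show ?thesis by simp
    next
      case False then show ?thesis using h mult_right_le_imp_le[of "norm (c n - q)" "norm (c n - q)" "norm (u - q)"] by simp
    qed
  qed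
  define g where "g n = (norm (c n - u))\<^sup>2" for n
  have gmono: "(norm (c m - c n))\<^sup>2 \<le> g m - g n" if "n \<le> m" for n m
  proof (cases "n = m")
    case True then show ?thesis by simp
  next
    case False
    then have "tt m < tt n" using ttm that by simp
    then show ?thesis unfolding g_def
      using tt[of m] tt[of n] browder_mono[where V = V, OF _ _ _ ceq[of m] ceq[of n] Vne[OF cD cD]] by auto
  qed
  have gbd: "g n \<le> (2 * norm (u - q0))\<^sup>2" for n
  proof -
    have "norm (c n - u) \<le> norm (c n - q0) + norm (u - q0)" using norm_triangle_ineq4[of "c n - q0" "u - q0"] by simp
    then have "norm (c n - u) \<le> 2 * norm (u - q0)" using B1'[OF q0, of n] by linarith
    then show ?thesis unfolding g_def by (intro power_mono) auto
  qed
  have "convergent g"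
  proof (rule Bseq_mono_convergent)
    show "Bseq g" using gbd by (intro BseqI'[where K = "(2 * norm (u - q0))\<^sup>2"]) (auto simp: g_def)
    show "\<forall>m n. m \<le> n \<longrightarrow> g m \<le> g n"
    proof (intro allI impI)
      fix m n :: nat assume "m \<le> n"
      show "g m \<le> g n" using gmono[OF \<open>m \<le> n\<close>] zero_le_power2[of "norm (c n - c m)"] by linarith
    qed
  qed
  then have "Cauchy g" by (simp add: Cauchy_convergent_iff)
  have "Cauchy c"
  proof (rule metric_CauchyI)
    fix e :: real assume "e > 0"
    then have "e\<^sup>2 > 0" by simp
    from metric_CauchyD[OF \<open>Cauchy g\<close> this] obtain M where M: "\<And>m n. m \<ge> M \<Longrightarrow> n \<ge> M \<Longrightarrow> dist (g m) (g n) < e\<^sup>2" by blast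
    have "dist (c m) (c n) < e" if "m \<ge> M" "n \<ge> M" for m n
    proof -
      have "(dist (c m) (c n))\<^sup>2 < e\<^sup>2"
      proof (cases "n \<le> m")
        case True
        then show ?thesis using gmono[OF True] M[OF that] by (simp add: dist_norm)
      next
        case False
        then have "(norm (c n - c m))\<^sup>2 \<le> g n - g m" using gmono by simp
        then show ?thesis using M[OF that] by (simp add: dist_norm norm_minus_commute dist_real_def)
      qed
      then show ?thesis using \<open>e>0\<close> by (simp add: power_less_imp_less_base)
    qed
    then show "\<exists>M. \<forall>m\<ge>M. \<forall>n\<ge>M. dist (c m) (c n) < e" by blast
  qed
  then obtain p where cp: "c \<longlonglongrightarrow> p" using Cauchy_convergent_iff convergent_def by blast
  have pD: "p \<in> D" using D(1) cD cp closed_sequentially by blast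
  have Vcp: "(\<lambda>n. V (c n)) \<longlonglongrightarrow> V p"
  proof -
    have "(\<lambda>n. V (c n) - V p) \<longlonglongrightarrow> 0"
    proof (rule Lim_null_comparison)
      show "\<forall>\<^sub>F n in sequentially. norm (V (c n) - V p) \<le> norm (c n - p)" using Vne cD pD by auto
      show "(\<lambda>n. norm (c n - p)) \<longlonglongrightarrow> 0" using cp by (simp add: tendsto_norm_zero_iff LIM_zero)
    qed
    then show ?thesis by (simp add: LIM_zero_iff)
  qed
  have cV: "(\<lambda>n. c n - V (c n)) \<longlonglongrightarrow> 0"
  proof (rule Lim_null_comparison)
    have "norm (c n - V (c n)) \<le> 8 * norm (u - q0) * tt n" for n
    proof -
      have e1: "(1 - tt n) *\<^sub>R (c n - V (c n)) = - tt n *\<^sub>R (c n - u)"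
      proof -
        have "(1 - tt n) *\<^sub>R V (c n) = c n - tt n *\<^sub>R u" using ceq[of n] by (simp add: algebra_simps)
        then show ?thesis by (simp add: algebra_simps)
      qed
      have n1: "norm ((1 - tt n) *\<^sub>R (c n - V (c n))) = (1 - tt n) * norm (c n - V (c n))"
        using tt[of n] by (simp add: norm_scaleR)
      have n2: "norm (- tt n *\<^sub>R (c n - u)) = tt n * norm (c n - u)"
        using tt[of n] by (simp add: norm_scaleR)
      have eqn: "(1 - tt n) * norm (c n - V (c n)) = tt n * norm (c n - u)"
        using n1 n2 e1 by metis
      have "norm (c n - u) \<le> 2 * norm (u - q0)"
        by (rule power2_le_imp_le) (use gbd[of n] in \<open>auto simp: g_def\<close>)
      then have "tt n * norm (c n - u) \<le> tt n * (2 * norm (u - q0))"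
        using tt[of n] by (intro mult_left_mono) auto
      with eqn have "(1 - tt n) * norm (c n - V (c n)) \<le> tt n * (2 * norm (u - q0))"
        by linarith
      moreover have "(1/2) * norm (c n - V (c n)) \<le> (1 - tt n) * norm (c n - V (c n))"
        using tt[of n] by (intro mult_right_mono) auto
      moreover have "tt n * (2 * norm (u - q0)) = 2 * (tt n * norm (u - q0))" by simp
      moreover have "8 * norm (u - q0) * tt n = 8 * (tt n * norm (u - q0))" by simp
      moreover have "0 \<le> tt n * norm (u - q0)" using tt[of n] by simp
      ultimately show ?thesis by linarith
    qed
    then show "\<forall>\<^sub>F n in sequentially. norm (c n - V (c n)) \<le> 8 * norm (u - q0) * tt n" by simp
    have "(\<lambda>n. inverse (real (Suc (Suc n)))) \<longlonglongrightarrow> 0"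
      using LIMSEQ_Suc[OF LIMSEQ_inverse_real_of_nat] .
    moreover have "(\<lambda>n. inverse (real (Suc (Suc n)))) = tt"
      by (auto simp: tt_def inverse_eq_divide add.commute)
    ultimately have "tt \<longlonglongrightarrow> 0" by simp
    then show "(\<lambda>n. 8 * norm (u - q0) * tt n) \<longlonglongrightarrow> 0"
      using tendsto_mult_right_zero by blast
  qed
  have "(\<lambda>n. c n - V (c n)) \<longlonglongrightarrow> p - V p" using cp Vcp by (rule tendsto_diff)
  then have "p - V p = 0" using cV LIMSEQ_unique by blast
  then have pF: "p \<in> F" using pD Fdef by auto
  have var: "inner (u - p) (q - p) \<le> 0" if "q \<in> F" for q
  proof -
    have "(norm (p - q))\<^sup>2 \<le> inner (u - q) (p - q)"
    proof (rule LIMSEQ_le)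
      show "(\<lambda>n. (norm (c n - q))\<^sup>2) \<longlonglongrightarrow> (norm (p - q))\<^sup>2" using cp by (intro tendsto_intros)
      show "(\<lambda>n. inner (u - q) (c n - q)) \<longlonglongrightarrow> inner (u - q) (p - q)" using cp by (intro tendsto_intros)
      show "\<exists>N. \<forall>n\<ge>N. (norm (c n - q))\<^sup>2 \<le> inner (u - q) (c n - q)" using B1[OF that] by blast
    qed
    moreover have "inner (u - p) (q - p) = - inner (u - q) (p - q) + (norm (p - q))\<^sup>2"
      unfolding power2_norm_eq_inner by (simp add: inner_diff_left inner_diff_right inner_commute)
    ultimately show ?thesis by linarith
  qed
  show ?thesis
    by (rule exI[of _ c], rule exI[of _ p]) (use pF cp cD ceq var in \<open>auto simp: tt_def\<close>)
qed



lemma path_x: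
  fixes V :: "'a::real_inner \<Rightarrow> 'a"
  assumes t: "0 < t" "t < 1" and z: "z = t *\<^sub>R u + (1 - t) *\<^sub>R V z"
    and ne: "norm (V z - V y) \<le> norm (z - y)"
  shows "t * inner (u - z) (y - z) \<le> norm (y - V y) * norm (z - y)"
proof -
  define N where "N = norm (z - y)"
  define ep where "ep = norm (y - V y)"
  have "z - y = t *\<^sub>R (u - y) + (1 - t) *\<^sub>R (V z - y)"
    by (subst z) (simp add: algebra_simps)
  then have "inner (z - y) (z - y) = t * inner (u - y) (z - y) + (1 - t) * inner (V z - y) (z - y)"
    by (metis inner_add_left inner_scaleR_left)
  then have e1: "N\<^sup>2 = t * inner (u - y) (z - y) + (1 - t) * inner (V z - y) (z - y)"
    by (simp add: N_def power2_norm_eq_inner)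
  have "inner (V z - y) (z - y) = inner (V z - V y) (z - y) + inner (V y - y) (z - y)"
    by (simp add: inner_diff_left)
  moreover have "inner (V z - V y) (z - y) \<le> N * N"
    using norm_cauchy_schwarz[of "V z - V y" "z - y"] mult_right_mono[OF ne norm_ge_zero[of "z - y"]]
    by (simp add: N_def)
  moreover have "inner (V y - y) (z - y) \<le> ep * N"
    using norm_cauchy_schwarz[of "V y - y" "z - y"] by (simp add: N_def ep_def norm_minus_commute)
  ultimately have e2: "inner (V z - y) (z - y) \<le> N * N + ep * N" by linarith
  have e3: "inner (u - y) (z - y) = inner (u - z) (z - y) + N\<^sup>2"
    by (simp add: N_def power2_norm_eq_inner inner_diff_left inner_diff_right inner_commute)
  have "(1 - t) * inner (V z - y) (z - y) \<le> (1 - t) * (N * N + ep * N)"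
    using e2 t by (intro mult_left_mono) auto
  with e1 e3 have "N\<^sup>2 \<le> t * (inner (u - z) (z - y) + N\<^sup>2) + (1 - t) * (N * N + ep * N)" by simp
  then have "0 \<le> t * inner (u - z) (z - y) + (1 - t) * (ep * N)"
    by (simp add: power2_eq_square algebra_simps)
  moreover have "(1 - t) * (ep * N) \<le> ep * N"
    using t by (simp add: N_def ep_def mult_left_le_one_le)
  moreover have "inner (u - z) (y - z) = - inner (u - z) (z - y)"
    by (simp add: inner_diff_right)
  ultimately show ?thesis by (simp add: N_def ep_def)
qed

lemma inner_shift:
  fixes u p c y :: "'a::real_inner"
  shows "inner (u - p) (y - p) \<le> inner (u - c) (y - c) + norm (p - c) * (norm (u - p) + norm (y - p))"
proof -
  have "inner (u - c) (y - c) = inner ((u - p) + (p - c)) ((y - p) + (p - c))" by simp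
  also have "\<dots> = inner (u - p) (y - p) + inner (u - p) (p - c) + inner (p - c) (y - p) + inner (p - c) (p - c)"
    by (simp only: inner_add_left inner_add_right)
  finally have eq: "inner (u - c) (y - c) = inner (u - p) (y - p) + inner (u - p) (p - c) + inner (p - c) (y - p) + inner (p - c) (p - c)" .
  have "\<bar>inner (u - p) (p - c)\<bar> \<le> norm (u - p) * norm (p - c)" by (rule Cauchy_Schwarz_ineq2)
  moreover have "\<bar>inner (p - c) (y - p)\<bar> \<le> norm (p - c) * norm (y - p)" by (rule Cauchy_Schwarz_ineq2)
  moreover have "0 \<le> inner (p - c) (p - c)" by simp
  ultimately show ?thesis using eq by (simp add: algebra_simps)
qed

lemma halpern_step:
  fixes u p w z :: "'a::real_inner"
  assumes l: "0 \<le> l" "l \<le> 1" and y: "y = l *\<^sub>R u + (1 - l) *\<^sub>R w" and ne: "norm (w - p) \<le> norm (z - p)"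
  shows "(norm (y - p))\<^sup>2 \<le> (1 - l) * (norm (z - p))\<^sup>2 + l * (2 * inner (u - p) (y - p))"
proof -
  define B where "B = (1 - l) *\<^sub>R (w - p)"
  have "y - p = l *\<^sub>R (u - p) + B" unfolding B_def y by (simp add: algebra_simps)
  then have "inner (y - p) (y - p) = l * inner (u - p) (y - p) + inner B (y - p)"
    by (metis inner_add_left inner_scaleR_left)
  moreover have "inner B (y - p) \<le> norm B * norm (y - p)" by (rule norm_cauchy_schwarz)
  moreover have "norm B * norm (y - p) \<le> ((norm B)\<^sup>2 + (norm (y - p))\<^sup>2) / 2"
    using zero_le_power2[of "norm B - norm (y - p)"] by (simp add: power2_eq_square algebra_simps)
  ultimately have "(norm (y - p))\<^sup>2 \<le> 2 * l * inner (u - p) (y - p) + (norm B)\<^sup>2"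
    by (simp add: power2_norm_eq_inner)
  moreover have "norm B = (1 - l) * norm (w - p)" using l by (simp add: B_def)
  then have "norm B \<le> (1 - l) * norm (z - p)" using l ne by (simp add: mult_left_mono)
  then have "(norm B)\<^sup>2 \<le> ((1 - l) * norm (z - p))\<^sup>2" by (intro power_mono) auto
  moreover have "((1 - l) * norm (z - p))\<^sup>2 \<le> (1 - l) * (norm (z - p))\<^sup>2"
  proof -
    have "((1 - l) * norm (z - p))\<^sup>2 = (1 - l) * ((1 - l) * (norm (z - p))\<^sup>2)" by (simp add: power2_eq_square)
    also have "\<dots> \<le> (1 - l) * (norm (z - p))\<^sup>2" using l by (intro mult_left_le_one_le) auto
    finally show ?thesis .
  qed
  ultimately show ?thesis by (simp add: algebra_simps)
qed

lemma halpern: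
  fixes D :: "'a::{real_inner,complete_space} set" and V :: "'a \<Rightarrow> 'a" and x :: "nat \<Rightarrow> 'a"
  assumes D: "closed D" "convex D" and VD: "\<And>y. y \<in> D \<Longrightarrow> V y \<in> D"
    and Vne: "\<And>y z. y \<in> D \<Longrightarrow> z \<in> D \<Longrightarrow> norm (V y - V z) \<le> norm (y - z)"
    and Fdef: "F = {y\<in>D. V y = y}" and Fne: "F \<noteq> {}" and u: "u \<in> D" and x0: "x 0 \<in> D"
    and st: "steering lam"
    and rec: "\<And>k. x (Suc k) = lam k *\<^sub>R u + (1 - lam k) *\<^sub>R V (x k)"
  shows "x \<longlonglongrightarrow> metric_proj F u"
proof -
  obtain q0 where q0: "q0 \<in> F" using Fne by blast
  have q0D: "q0 \<in> D" "V q0 = q0" using q0 Fdef by auto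
  have l01: "\<And>k. 0 \<le> lam k \<and> lam k \<le> 1" and l0: "lam \<longlonglongrightarrow> 0" and ns: "\<not> summable lam"
    and sd: "summable (\<lambda>k. \<bar>lam (Suc k) - lam k\<bar>)"
    using st unfolding steering_def by auto
  have xD: "x k \<in> D" for k
  proof (induction k)
    case 0 then show ?case using x0 .
  next
    case (Suc k) then show ?case unfolding rec using l01[of k] by (intro convexD[OF D(2) u VD]) auto
  qed
  define M where "M = max (norm (u - q0)) (norm (x 0 - q0))"
  have xb: "norm (x k - q0) \<le> M" for k
  proof (induction k)
    case 0 then show ?case by (simp add: M_def)
  next
    case (Suc k)
    have "x (Suc k) - q0 = lam k *\<^sub>R (u - q0) + (1 - lam k) *\<^sub>R (V (x k) - q0)"
      unfolding rec by (simp add: algebra_simps)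
    then have "norm (x (Suc k) - q0) \<le> norm (lam k *\<^sub>R (u - q0)) + norm ((1 - lam k) *\<^sub>R (V (x k) - q0))"
      by (metis norm_triangle_ineq)
    also have "\<dots> = lam k * norm (u - q0) + (1 - lam k) * norm (V (x k) - q0)" using l01[of k] by simp
    also have "\<dots> \<le> lam k * M + (1 - lam k) * M"
    proof (intro add_mono mult_left_mono)
      show "norm (u - q0) \<le> M" by (simp add: M_def)
      show "norm (V (x k) - q0) \<le> M" using Vne[OF xD q0D(1), of k] q0D(2) Suc by (metis order_trans)
    qed (use l01[of k] in auto)
    finally show ?case by (simp add: algebra_simps)
  qed
  have Vb: "norm (V (x k) - q0) \<le> M" for k using Vne[OF xD q0D(1), of k] q0D(2) xb[of k] by (metis order_trans)
  have uVb: "norm (u - V (x k)) \<le> 2 * M" for k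
  proof -
    have "norm (u - V (x k)) \<le> norm (u - q0) + norm (V (x k) - q0)"
      using norm_triangle_ineq4[of "u - q0" "V (x k) - q0"] by simp
    then show ?thesis using Vb[of k] by (simp add: M_def)
  qed
  have M0: "0 \<le> M" unfolding M_def by (rule order_trans[OF norm_ge_zero max.cobounded1])
  define a where "a k = norm (x (Suc k) - x k)" for k
  have a0: "a \<longlonglongrightarrow> 0"
  proof (rule xu_lemma[where l = "\<lambda>k. lam (Suc k)" and b = "\<lambda>k. 0" and g = "\<lambda>k. 2 * M * \<bar>lam (Suc k) - lam k\<bar>"])
    show "\<And>k. 0 \<le> a k" by (simp add: a_def)
    show "\<And>k. 0 \<le> lam (Suc k) \<and> lam (Suc k) \<le> 1" using l01 by blast
    show "\<not> summable (\<lambda>k. lam (Suc k))" using ns by (simp add: summable_Suc_iff)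
    show "\<And>k. 0 \<le> 2 * M * \<bar>lam (Suc k) - lam k\<bar>" using M0 by simp
    show "summable (\<lambda>k. 2 * M * \<bar>lam (Suc k) - lam k\<bar>)" using sd by (rule summable_mult)
    show "\<And>e. 0 < e \<Longrightarrow> \<forall>\<^sub>F k in sequentially. (0::real) \<le> e" by simp
    fix k
    have "x (Suc (Suc k)) - x (Suc k) = (lam (Suc k) *\<^sub>R u + (1 - lam (Suc k)) *\<^sub>R V (x (Suc k))) - (lam k *\<^sub>R u + (1 - lam k) *\<^sub>R V (x k))"
      by (metis rec)
    also have "\<dots> = (lam (Suc k) - lam k) *\<^sub>R (u - V (x k)) + (1 - lam (Suc k)) *\<^sub>R (V (x (Suc k)) - V (x k))"
      by (simp add: algebra_simps)
    finally have "x (Suc (Suc k)) - x (Suc k) = (lam (Suc k) - lam k) *\<^sub>R (u - V (x k)) + (1 - lam (Suc k)) *\<^sub>R (V (x (Suc k)) - V (x k))" .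
    then have "a (Suc k) \<le> norm ((lam (Suc k) - lam k) *\<^sub>R (u - V (x k))) + norm ((1 - lam (Suc k)) *\<^sub>R (V (x (Suc k)) - V (x k)))"
      unfolding a_def by (metis norm_triangle_ineq)
    also have "\<dots> = \<bar>lam (Suc k) - lam k\<bar> * norm (u - V (x k)) + (1 - lam (Suc k)) * norm (V (x (Suc k)) - V (x k))"
      using l01[of "Suc k"] by simp
    also have "\<dots> \<le> \<bar>lam (Suc k) - lam k\<bar> * (2 * M) + (1 - lam (Suc k)) * a k"
      unfolding a_def using l01[of "Suc k"] uVb[of k] Vne[OF xD xD, of "Suc k" k]
      by (intro add_mono mult_left_mono) auto
    finally show "a (Suc k) \<le> (1 - lam (Suc k)) * a k + lam (Suc k) * 0 + 2 * M * \<bar>lam (Suc k) - lam k\<bar>"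
      by (simp add: algebra_simps)
  qed
  have eps0: "(\<lambda>k. x k - V (x k)) \<longlonglongrightarrow> 0"
  proof (rule Lim_null_comparison)
    have "norm (x k - V (x k)) \<le> a k + lam k * (2 * M)" for k
    proof -
      have "x k - V (x k) = (x k - (lam k *\<^sub>R u + (1 - lam k) *\<^sub>R V (x k))) + lam k *\<^sub>R (u - V (x k))"
        by (simp add: algebra_simps)
      then have "x k - V (x k) = (x k - x (Suc k)) + lam k *\<^sub>R (u - V (x k))"
        by (metis rec)
      then have "norm (x k - V (x k)) \<le> norm (x k - x (Suc k)) + norm (lam k *\<^sub>R (u - V (x k)))"
        by (metis norm_triangle_ineq)
      also have "\<dots> \<le> a k + lam k * (2 * M)"
        unfolding a_def using l01[of k] uVb[of k] by (simp add: norm_minus_commute mult_left_mono)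
      finally show ?thesis .
    qed
    then show "\<forall>\<^sub>F k in sequentially. norm (x k - V (x k)) \<le> a k + lam k * (2 * M)" by simp
    show "(\<lambda>k. a k + lam k * (2 * M)) \<longlonglongrightarrow> 0"
      using tendsto_add[OF a0 tendsto_mult_left_zero[OF l0]] by simp
  qed
  obtain c p where pF: "p \<in> F" and cp: "c \<longlonglongrightarrow> p"
    and cD: "\<And>n. c n \<in> D" and ceq: "\<And>n. c n = (1 / (real n + 2)) *\<^sub>R u + (1 - 1 / (real n + 2)) *\<^sub>R V (c n)"
    and var: "\<And>q. q \<in> F \<Longrightarrow> inner (u - p) (q - p) \<le> 0"
    using browder[OF D VD Vne Fdef q0 u] by blast
  have proj: "metric_proj F u = p" using proj_char[OF pF var] .
  obtain Bc where Bc: "\<And>n. norm (c n) \<le> Bc" using convergent_imp_Bseq[of c] cp unfolding Bseq_def convergent_def by blast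
  define Mx where "Mx = M + norm q0"
  have xMx: "norm (x k) \<le> Mx" for k
    using xb[of k] norm_triangle_ineq[of "x k - q0" q0] by (simp add: Mx_def)
  define R where "R = Bc + Mx"
  have cxR: "norm (c n - x k) \<le> R" for n k
    using norm_triangle_ineq4[of "c n" "x k"] Bc[of n] xMx[of k] by (simp add: R_def)
  have R0: "0 \<le> R" using cxR[of 0 0] norm_ge_zero order_trans by blast
  define L where "L = norm (u - p) + Mx + norm p + 1"
  have L0: "L > 0" using xMx[of 0] norm_ge_zero[of "x 0"] norm_ge_zero[of "u - p"] norm_ge_zero[of p] unfolding L_def by linarith
  have ls: "\<forall>\<^sub>F k in sequentially. inner (u - p) (x k - p) \<le> e" if e: "e > 0" for e
  proof -
    have "e / (2 * L) > 0" using e L0 by simp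
    from LIMSEQ_D[OF cp this] obtain n where n: "norm (c n - p) < e / (2 * L)" by blast
    define t where "t = 1 / (real n + 2)"
    have t: "0 < t" "t < 1" by (auto simp: t_def field_simps)
    have "t * e / 2 / (R + 1) > 0" using t e R0 by simp
    from LIMSEQ_D[OF eps0 this] obtain K where K: "\<And>k. k \<ge> K \<Longrightarrow> norm (x k - V (x k)) < t * e / 2 / (R + 1)"
      by auto
    have "inner (u - p) (x k - p) \<le> e" if k: "k \<ge> K" for k
    proof -
      have "t * inner (u - c n) (x k - c n) \<le> norm (x k - V (x k)) * norm (c n - x k)"
        using path_x[OF t, of "c n" u V "x k"] ceq[of n] Vne[OF cD xD, of n k] by (simp add: t_def)
      also have "\<dots> \<le> (t * e / 2 / (R + 1)) * (R + 1)"
        using K[OF k] cxR[of n k] \<open>t * e / 2 / (R + 1) > 0\<close> by (intro mult_mono) auto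
      also have "\<dots> = t * (e / 2)" using R0 by (simp add: field_simps)
      finally have i1: "inner (u - c n) (x k - c n) \<le> e / 2" using t by simp
      have "norm (x k - p) \<le> Mx + norm p" using norm_triangle_ineq4[of "x k" p] xMx[of k] by simp
      then have "norm (u - p) + norm (x k - p) \<le> L" by (simp add: L_def)
      then have "norm (p - c n) * (norm (u - p) + norm (x k - p)) \<le> (e / (2 * L)) * L"
        using n \<open>e / (2 * L) > 0\<close> by (intro mult_mono) (auto simp: norm_minus_commute)
      also have "\<dots> = e / 2" using L0 by simp
      finally show ?thesis using inner_shift[of u p "x k" "c n"] i1 by linarith
    qed
    then show ?thesis using eventually_sequentially by blast
  qed
  have "(\<lambda>k. (norm (x k - p))\<^sup>2) \<longlonglongrightarrow> 0"
  proof (rule xu_lemma[where l = lam and b = "\<lambda>k. 2 * inner (u - p) (x (Suc k) - p)" and g = "\<lambda>k. 0"])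
    show "\<And>k. 0 \<le> (norm (x k - p))\<^sup>2" by simp
    show "\<And>k. 0 \<le> lam k \<and> lam k \<le> 1" by (rule l01)
    show "\<not> summable lam" by (rule ns)
    show "\<And>k. 0 \<le> (0::real)" by simp
    show "summable (\<lambda>k. 0::real)" by simp
    fix k
    have pp: "V p = p" "p \<in> D" using pF Fdef by auto
    show "(norm (x (Suc k) - p))\<^sup>2 \<le> (1 - lam k) * (norm (x k - p))\<^sup>2 + lam k * (2 * inner (u - p) (x (Suc k) - p)) + 0"
      using halpern_step[of "lam k" "x (Suc k)" u "V (x k)" p "x k"] l01[of k] rec[of k] Vne[OF xD pp(2), of k] pp(1)
      by simp
  next
    fix e :: real assume "e > 0"
    then have "e / 2 > 0" by simp
    from ls[OF this] obtain K where K: "\<And>k. k \<ge> K \<Longrightarrow> inner (u - p) (x k - p) \<le> e / 2"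
      by (auto simp: eventually_sequentially)
    have "2 * inner (u - p) (x (Suc k) - p) \<le> e" if "k \<ge> K" for k
      using K[of "Suc k"] that by simp
    then show "\<forall>\<^sub>F k in sequentially. 2 * inner (u - p) (x (Suc k) - p) \<le> e"
      using eventually_sequentially by blast
  qed
  then have "(\<lambda>k. sqrt ((norm (x k - p))\<^sup>2)) \<longlonglongrightarrow> sqrt 0" by (rule tendsto_real_sqrt)
  then have "(\<lambda>k. norm (x k - p)) \<longlonglongrightarrow> 0" by simp
  then have "x \<longlonglongrightarrow> p" by (simp add: tendsto_norm_zero_iff LIM_zero_iff)
  then show ?thesis using proj by simp
qed



lemma fne_ne:
  assumes "firmly_nonexpansive_on D T" "x \<in> D" "y \<in> D"
  shows "norm (T x - T y) \<le> norm (x - y)"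
proof -
  have "(norm (T x - T y))\<^sup>2 \<le> inner (x - y) (T x - T y)"
    using assms unfolding firmly_nonexpansive_on_def by blast
  also have "\<dots> \<le> norm (x - y) * norm (T x - T y)" by (rule norm_cauchy_schwarz)
  finally have h: "norm (T x - T y) * norm (T x - T y) \<le> norm (x - y) * norm (T x - T y)"
    by (simp add: power2_eq_square)
  show ?thesis
  proof (cases "norm (T x - T y) = 0")
    case True then show ?thesis by simp
  next
    case False then show ?thesis using h mult_right_le_imp_le[of "norm (T x - T y)" "norm (T x - T y)" "norm (x - y)"] by simp
  qed
qed

lemma fne_quasi:
  assumes "firmly_nonexpansive_on D T" "x \<in> D" "q \<in> D" "T q = q"
  shows "(norm (T x - q))\<^sup>2 + (norm (x - T x))\<^sup>2 \<le> (norm (x - q))\<^sup>2"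
proof -
  have f: "(norm (T x - q))\<^sup>2 \<le> inner (x - q) (T x - q)"
    using assms unfolding firmly_nonexpansive_on_def by (metis)
  have "(norm ((x - T x) + (T x - q)))\<^sup>2 = (norm (x - T x))\<^sup>2 + 2 * inner (x - T x) (T x - q) + (norm (T x - q))\<^sup>2"
    unfolding power2_norm_eq_inner by (simp only: inner_add_left inner_add_right inner_commute[of "T x - q" "x - T x"])
  moreover have "inner (x - T x) (T x - q) = inner (x - q) (T x - q) - (norm (T x - q))\<^sup>2"
  proof -
    have "x - T x = (x - q) - (T x - q)" by simp
    then show ?thesis unfolding power2_norm_eq_inner by (metis inner_diff_left)
  qed
  ultimately show ?thesis using f by simp
qed

lemma cc_diff:
  fixes f :: "'b \<Rightarrow> 'a::real_vector"
  assumes "(\<Sum>j\<in>A. c j) = 1"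
  shows "(\<Sum>j\<in>A. c j *\<^sub>R f j) - q = (\<Sum>j\<in>A. c j *\<^sub>R (f j - q))"
proof -
  have "(\<Sum>j\<in>A. c j *\<^sub>R (f j - q)) = (\<Sum>j\<in>A. c j *\<^sub>R f j) - (\<Sum>j\<in>A. c j *\<^sub>R q)"
    by (simp add: scaleR_diff_right sum_subtractf)
  also have "(\<Sum>j\<in>A. c j *\<^sub>R q) = q" using assms by (simp add: scaleR_left.sum[symmetric])
  finally show ?thesis by simp
qed

lemma cc_norm:
  fixes f :: "'b \<Rightarrow> 'a::real_normed_vector"
  assumes "(\<Sum>j\<in>A. c j) = 1" "\<And>j. j \<in> A \<Longrightarrow> 0 \<le> c j"
  shows "norm ((\<Sum>j\<in>A. c j *\<^sub>R f j) - q) \<le> (\<Sum>j\<in>A. c j * norm (f j - q))"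
proof -
  have "norm ((\<Sum>j\<in>A. c j *\<^sub>R f j) - q) = norm (\<Sum>j\<in>A. c j *\<^sub>R (f j - q))" using cc_diff[OF assms(1), of f q] by simp
  also have "\<dots> \<le> (\<Sum>j\<in>A. norm (c j *\<^sub>R (f j - q)))" by (rule norm_sum)
  also have "\<dots> = (\<Sum>j\<in>A. c j * norm (f j - q))" using assms(2) by (intro sum.cong) auto
  finally show ?thesis .
qed

lemma cc_norm2:
  fixes f g :: "'b \<Rightarrow> 'a::real_normed_vector"
  assumes "\<And>j. j \<in> A \<Longrightarrow> 0 \<le> c j"
  shows "norm ((\<Sum>j\<in>A. c j *\<^sub>R f j) - (\<Sum>j\<in>A. c j *\<^sub>R g j)) \<le> (\<Sum>j\<in>A. c j * norm (f j - g j))"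
proof -
  have "(\<Sum>j\<in>A. c j *\<^sub>R f j) - (\<Sum>j\<in>A. c j *\<^sub>R g j) = (\<Sum>j\<in>A. c j *\<^sub>R (f j - g j))"
    by (simp add: scaleR_diff_right sum_subtractf)
  then have "norm ((\<Sum>j\<in>A. c j *\<^sub>R f j) - (\<Sum>j\<in>A. c j *\<^sub>R g j)) = norm (\<Sum>j\<in>A. c j *\<^sub>R (f j - g j))" by simp
  also have "\<dots> \<le> (\<Sum>j\<in>A. norm (c j *\<^sub>R (f j - g j)))" by (rule norm_sum)
  also have "\<dots> = (\<Sum>j\<in>A. c j * norm (f j - g j))" using assms by (intro sum.cong) auto
  finally show ?thesis .
qed

lemma cc_le:
  fixes a :: "'b \<Rightarrow> real"
  assumes "(\<Sum>j\<in>A. c j) = 1" "\<And>j. j \<in> A \<Longrightarrow> 0 \<le> c j" "\<And>j. j \<in> A \<Longrightarrow> a j \<le> M"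
  shows "(\<Sum>j\<in>A. c j * a j) \<le> M"
proof -
  have "(\<Sum>j\<in>A. c j * a j) \<le> (\<Sum>j\<in>A. c j * M)" using assms by (intro sum_mono mult_left_mono) auto
  also have "\<dots> = (\<Sum>j\<in>A. c j) * M" by (rule sum_distrib_right[symmetric])
  also have "\<dots> = M" using assms(1) by simp
  finally show ?thesis .
qed

lemma cc_eq:
  fixes a :: "'b \<Rightarrow> real"
  assumes "finite A" "(\<Sum>j\<in>A. c j) = 1" "\<And>j. j \<in> A \<Longrightarrow> 0 < c j" "\<And>j. j \<in> A \<Longrightarrow> a j \<le> M"
    and "M \<le> (\<Sum>j\<in>A. c j * a j)" and "j \<in> A"
  shows "a j = M"
proof -
  have "(\<Sum>j\<in>A. c j * (M - a j)) = (\<Sum>j\<in>A. c j) * M - (\<Sum>j\<in>A. c j * a j)"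
    by (simp only: right_diff_distrib sum_subtractf sum_distrib_right)
  then have s: "(\<Sum>j\<in>A. c j * (M - a j)) \<le> 0" using assms(2,5) by simp
  have nn: "\<forall>j\<in>A. 0 \<le> c j * (M - a j)" using assms(3,4) by (simp add: less_imp_le)
  moreover have "0 \<le> (\<Sum>j\<in>A. c j * (M - a j))" using nn by (intro sum_nonneg) auto
  ultimately have "(\<Sum>j\<in>A. c j * (M - a j)) = 0" using s by linarith
  then have "\<forall>j\<in>A. c j * (M - a j) = 0" using sum_nonneg_eq_0_iff[OF assms(1), of "\<lambda>j. c j * (M - a j)"] nn by simp
  then have "c j * (M - a j) = 0" using assms(6) by blast
  then show ?thesis using assms(3)[OF assms(6)] by simp
qed



context
  fixes D :: "'a::real_inner set" and T :: "nat \<Rightarrow> 'a \<Rightarrow> 'a" and m :: nat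
  assumes TD: "\<And>i. i \<in> {1..m} \<Longrightarrow> T i ` D \<subseteq> D"
    and Tf: "\<And>i. i \<in> {1..m} \<Longrightarrow> firmly_nonexpansive_on D (T i)"
begin

lemma str_D: "set t \<subseteq> {1..m} \<Longrightarrow> y \<in> D \<Longrightarrow> string_op T t y \<in> D"
proof (induction t arbitrary: y)
  case Nil then show ?case by simp
next
  case (Cons i t)
  have i: "i \<in> {1..m}" using Cons.prems(1) by simp
  have "T i y \<in> D" using TD[OF i] Cons.prems(2) by blast
  moreover have "set t \<subseteq> {1..m}" using Cons.prems(1) by simp
  ultimately have "string_op T t (T i y) \<in> D" using Cons.IH by blast
  then show ?case by simp
qed

lemma str_ne: "set t \<subseteq> {1..m} \<Longrightarrow> y \<in> D \<Longrightarrow> z \<in> D \<Longrightarrow>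
    norm (string_op T t y - string_op T t z) \<le> norm (y - z)"
proof (induction t arbitrary: y z)
  case Nil then show ?case by simp
next
  case (Cons i t)
  have i: "i \<in> {1..m}" using Cons.prems(1) by simp
  have st: "set t \<subseteq> {1..m}" using Cons.prems(1) by simp
  have D2: "T i y \<in> D" "T i z \<in> D" using TD[OF i] Cons.prems(2,3) by blast+
  have "norm (string_op T t (T i y) - string_op T t (T i z)) \<le> norm (T i y - T i z)"
    using Cons.IH[OF st D2] .
  also have "\<dots> \<le> norm (y - z)" using fne_ne[OF Tf[OF i] Cons.prems(2,3)] .
  finally show ?case by simp
qed

lemma str_fix: "set t \<subseteq> {1..m} \<Longrightarrow> (\<And>i. i \<in> {1..m} \<Longrightarrow> T i q = q) \<Longrightarrow> string_op T t q = q"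
proof (induction t)
  case Nil then show ?case by simp
next
  case (Cons i t)
  have "T i q = q" using Cons.prems by simp
  moreover have "string_op T t q = q" using Cons.IH Cons.prems by simp
  ultimately show ?case by simp
qed

lemma str_eq:
  assumes q: "q \<in> D" "\<And>i. i \<in> {1..m} \<Longrightarrow> T i q = q"
  shows "set t \<subseteq> {1..m} \<Longrightarrow> y \<in> D \<Longrightarrow> norm (y - q) \<le> norm (string_op T t y - q) \<Longrightarrow>
    \<forall>i\<in>set t. T i y = y"
proof (induction t arbitrary: y)
  case Nil then show ?case by simp
next
  case (Cons i t)
  have i: "i \<in> {1..m}" using Cons.prems(1) by simp
  have st: "set t \<subseteq> {1..m}" using Cons.prems(1) by simp
  have TiD: "T i y \<in> D" using TD[OF i] Cons.prems(2) by blast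
  have sq: "string_op T t q = q" using str_fix[OF st] q(2) by blast
  have h1: "norm (string_op T t (T i y) - q) \<le> norm (T i y - q)"
    using str_ne[OF st TiD q(1)] sq by simp
  have qf: "(norm (T i y - q))\<^sup>2 + (norm (y - T i y))\<^sup>2 \<le> (norm (y - q))\<^sup>2"
    using fne_quasi[OF Tf[OF i] Cons.prems(2) q(1) q(2)[OF i]] .
  have p3: "norm (y - q) \<le> norm (string_op T t (T i y) - q)" using Cons.prems(3) by simp
  have "norm (y - q) \<le> norm (T i y - q)" using p3 h1 by linarith
  then have "(norm (y - q))\<^sup>2 \<le> (norm (T i y - q))\<^sup>2" by (intro power_mono) auto
  then have "(norm (y - T i y))\<^sup>2 \<le> 0" using qf by linarith
  then have Tiy: "T i y = y" by simp
  have "norm (y - q) \<le> norm (string_op T t y - q)" using p3 Tiy by simp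
  then have "\<forall>j\<in>set t. T j y = y" using Cons.IH[OF st Cons.prems(2)] by blast
  then show ?case using Tiy by simp
qed

end

theorem theorem6:
  fixes D :: "'a::{real_inner, complete_space} set"
    and T :: "nat \<Rightarrow> 'a \<Rightarrow> 'a"
    and m N :: nat
    and Om :: "nat \<Rightarrow> nat list set"
    and W :: "nat \<Rightarrow> nat list \<Rightarrow> real"
    and what :: "nat \<Rightarrow> real"
    and lam :: "nat \<Rightarrow> real"
    and u x0 :: 'a
    and x :: "nat \<Rightarrow> 'a"
  assumes "D \<noteq> {}" "closed D" "convex D"
    and "\<And>i. i \<in> {1..m} \<Longrightarrow> T i ` D \<subseteq> D"
    and "\<And>i. i \<in> {1..m} \<Longrightarrow> firmly_nonexpansive_on D (T i)"
    and "(\<Inter>i\<in>{1..m}. Fix D (T i)) \<noteq> {}"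
    and "N \<ge> 1"
    and "\<And>r. r \<in> {1..N} \<Longrightarrow> in_M m (Om r) (W r)"
    and "inj_on (\<lambda>r. (Om r, restrict (W r) (Om r))) {1..N}"
    and "\<And>r. r \<in> {1..N} \<Longrightarrow> what r > 0"
    and "(\<Sum>r=1..N. what r) = 1"
    and "steering lam"
    and "u \<in> D" "x0 \<in> D"
    and "x 0 = x0"
    and "\<And>k. x (Suc k) = lam k *\<^sub>R u + (1 - lam k) *\<^sub>R (\<Sum>r=1..N. what r *\<^sub>R T_S T (Om r) (W r) (x k))"
  shows "x \<longlonglongrightarrow> metric_proj (\<Inter>i\<in>{1..m}. Fix D (T i)) u"
proof -
  note TD = assms(4) and Tf = assms(5)
  define F where "F = (\<Inter>i\<in>{1..m}. Fix D (T i))"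
  define V where "V y = (\<Sum>r=1..N. what r *\<^sub>R T_S T (Om r) (W r) y)" for y
  have r1: "1 \<in> {1..N}" using assms(7) by simp
  have OmF: "finite (Om r)" "\<And>t. t \<in> Om r \<Longrightarrow> set t \<subseteq> {1..m}" "\<And>t. t \<in> Om r \<Longrightarrow> 0 < W r t"
    "(\<Sum>t\<in>Om r. W r t) = 1" "\<And>i. i \<in> {1..m} \<Longrightarrow> \<exists>t\<in>Om r. i \<in> set t"
    if "r \<in> {1..N}" for r
    using assms(8)[OF that] unfolding in_M_def fit_def index_vector_def by auto
  have m1: "m \<ge> 1"
  proof -
    have "Om 1 \<noteq> {}" using OmF(4)[OF r1] by auto
    then obtain t where t: "t \<in> Om 1" by blast
    then have "t \<noteq> []" using assms(8)[OF r1] unfolding in_M_def fit_def index_vector_def by auto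
    then obtain i where "i \<in> set t" by (cases t) auto
    then show ?thesis using OmF(2)[OF r1 t] by auto
  qed
  have Fchar: "y \<in> F \<longleftrightarrow> y \<in> D \<and> (\<forall>i\<in>{1..m}. T i y = y)" for y
    using m1 unfolding F_def Fix_def by auto
  have TSD: "T_S T (Om r) (W r) y \<in> D" if r: "r \<in> {1..N}" and y: "y \<in> D" for r y
    unfolding T_S_def using OmF[OF r] str_D[OF TD Tf] y
    by (intro convex_sum[OF _ assms(3)]) (auto simp: less_imp_le)
  have TSne: "norm (T_S T (Om r) (W r) y - T_S T (Om r) (W r) z) \<le> norm (y - z)"
    if r: "r \<in> {1..N}" and y: "y \<in> D" and z: "z \<in> D" for r y z
  proof -
    have "norm (T_S T (Om r) (W r) y - T_S T (Om r) (W r) z) \<le> (\<Sum>t\<in>Om r. W r t * norm (string_op T t y - string_op T t z))"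
      unfolding T_S_def using OmF(3)[OF r] by (intro cc_norm2) (auto simp: less_imp_le)
    also have "\<dots> \<le> norm (y - z)"
      using OmF[OF r] str_ne[OF TD Tf] y z by (intro cc_le) (auto simp: less_imp_le)
    finally show ?thesis .
  qed
  have TSfix: "T_S T (Om r) (W r) q = q" if r: "r \<in> {1..N}" and q: "q \<in> F" for r q
  proof -
    have "T_S T (Om r) (W r) q = (\<Sum>t\<in>Om r. W r t *\<^sub>R q)"
      unfolding T_S_def using OmF(2)[OF r] str_fix[OF TD Tf] q Fchar by (intro sum.cong) auto
    also have "\<dots> = q" using OmF(4)[OF r] by (simp add: scaleR_left.sum[symmetric])
    finally show ?thesis .
  qed
  have TSq: "norm (T_S T (Om r) (W r) y - q) \<le> (\<Sum>t\<in>Om r. W r t * norm (string_op T t y - q))"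
    if r: "r \<in> {1..N}" for r y q
    unfolding T_S_def using OmF[OF r] by (intro cc_norm) (auto simp: less_imp_le)
  have strq: "norm (string_op T t y - q) \<le> norm (y - q)" if "set t \<subseteq> {1..m}" "y \<in> D" "q \<in> F" for t y q
    using str_ne[OF TD Tf that(1) that(2), where z=q] str_fix[OF TD Tf that(1), where q=q] that(3) Fchar by auto
  have w0: "\<And>r. r \<in> {1..N} \<Longrightarrow> 0 \<le> what r" using assms(10) less_imp_le by blast
  have VD: "V y \<in> D" if "y \<in> D" for y
    unfolding V_def using assms(11) w0 TSD that by (intro convex_sum[OF _ assms(3)]) auto
  have Vne: "norm (V y - V z) \<le> norm (y - z)" if "y \<in> D" "z \<in> D" for y z
  proof -
    have "norm (V y - V z) \<le> (\<Sum>r=1..N. what r * norm (T_S T (Om r) (W r) y - T_S T (Om r) (W r) z))"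
      unfolding V_def using w0 by (intro cc_norm2) auto
    also have "\<dots> \<le> norm (y - z)" using assms(11) w0 TSne that by (intro cc_le) auto
    finally show ?thesis .
  qed
  have Fne: "F \<noteq> {}" using assms(6) F_def by simp
  have Fdef: "F = {y\<in>D. V y = y}"
  proof (intro set_eqI iffI)
    fix y assume y: "y \<in> F"
    have "V y = (\<Sum>r=1..N. what r *\<^sub>R y)" unfolding V_def
    proof (rule sum.cong)
      fix r assume "r \<in> {1..N}"
      then show "what r *\<^sub>R T_S T (Om r) (W r) y = what r *\<^sub>R y" using TSfix[OF _ y] by simp
    qed simp
    also have "\<dots> = (\<Sum>r=1..N. what r) *\<^sub>R y" by (rule scaleR_left.sum[symmetric])
    also have "\<dots> = y" using assms(11) by simp
    finally have "V y = y" .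
    moreover have "y \<in> D" using Fchar y by blast
    ultimately show "y \<in> {y\<in>D. V y = y}" by simp
  next
    fix y assume "y \<in> {y\<in>D. V y = y}"
    then have yD: "y \<in> D" and Vy: "V y = y" by auto
    obtain q where q: "q \<in> F" using Fne by (meson equals0I)
    have qD: "q \<in> D" "\<And>i. i \<in> {1..m} \<Longrightarrow> T i q = q" using q Fchar by auto
    have TSle: "norm (T_S T (Om r) (W r) y - q) \<le> norm (y - q)" if r: "r \<in> {1..N}" for r
    proof -
      have "(\<Sum>t\<in>Om r. W r t * norm (string_op T t y - q)) \<le> norm (y - q)"
      proof (rule cc_le)
        show "sum (W r) (Om r) = 1" by (rule OmF(4)[OF r])
        show "0 \<le> W r j" if "j \<in> Om r" for j using OmF(3)[OF r that] by simp
        show "norm (string_op T j y - q) \<le> norm (y - q)" if "j \<in> Om r" for j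
          using strq[OF OmF(2)[OF r that] yD q] .
      qed
      then show ?thesis using TSq[OF r, of y q] by linarith
    qed
    have "norm (y - q) = norm (V y - q)" using Vy by simp
    also have "\<dots> \<le> (\<Sum>r=1..N. what r * norm (T_S T (Om r) (W r) y - q))"
      unfolding V_def by (rule cc_norm[OF assms(11) w0])
    finally have s1: "norm (y - q) \<le> (\<Sum>r=1..N. what r * norm (T_S T (Om r) (W r) y - q))" .
    have e1: "norm (T_S T (Om 1) (W 1) y - q) = norm (y - q)"
      by (rule cc_eq[where A="{1..N}" and c=what and a="\<lambda>r. norm (T_S T (Om r) (W r) y - q)" and M="norm (y - q)" and j=1,
            OF finite_atLeastAtMost assms(11) assms(10) TSle s1 r1])
    have e2: "norm (string_op T t y - q) = norm (y - q)" if t: "t \<in> Om 1" for t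
    proof -
      have s2: "norm (y - q) \<le> (\<Sum>t\<in>Om 1. W 1 t * norm (string_op T t y - q))"
        using TSq[OF r1, of y q] e1 by simp
      show ?thesis
        by (rule cc_eq[where A="Om 1" and c="W 1" and a="\<lambda>t. norm (string_op T t y - q)" and M="norm (y - q)" and j=t,
            OF OmF(1)[OF r1] OmF(4)[OF r1] OmF(3)[OF r1] strq[OF OmF(2)[OF r1] yD q] s2 t])
    qed
    have "T i y = y" if i: "i \<in> {1..m}" for i
    proof -
      obtain t where t: "t \<in> Om 1" "i \<in> set t" using OmF(5)[OF r1 i] by blast
      have "norm (y - q) \<le> norm (string_op T t y - q)" using e2[OF t(1)] by simp
      from str_eq[where D=D and T=T and m=m and q=q and t=t and y=y, OF TD Tf qD(1) qD(2) OmF(2)[OF r1 t(1)] yD this]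
      show ?thesis using t(2) by blast
    qed
    then show "y \<in> F" using Fchar yD by auto
  qed
  have rec: "x (Suc k) = lam k *\<^sub>R u + (1 - lam k) *\<^sub>R V (x k)" for k
    using assms(16) unfolding V_def by simp
  have x0D: "x 0 \<in> D" using assms(14,15) by simp
  have "x \<longlonglongrightarrow> metric_proj F u"
    by (rule halpern[OF assms(2,3) VD Vne Fdef Fne assms(13) x0D assms(12) rec])
  then show ?thesis unfolding F_def .
qed

end
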